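(* Let $P=\{S_1,\ldots,S_n\}$ be a homothetic packing of $n$ squares with contact graph $G=([n],E)$. Let $\{i,j\}\in E$ and let $$p_{ij}=\left(x_i-\frac{r_i(x_i-x_j)}{r_i+r_j},\ y_i-\frac{r_i(y_i-y_j)}{r_i+r_j}\right).$$ Then: (1) the closed segment $[p_i,p_j]=\{tp_i+(1-t)p_j:t\in[0,1]\}$ is contained in $S_i\cup S_j$; (2) $[p_i,p_j]\setminus\{p_{ij}\}$ is contained in $S_i^\circ\cup S_j^\circ$; (3) $p_{ij}$ lies in the interior of $S_i\cup S_j$ if and only if $\{i,j\}\notin E_x\cap E_y$.
   Context: Let $S=\{(x,y): -1\le x,y\le 1\}$. A homothetic packing of $n$ squares is a set $P=\{S_1,\ldots,S_n\}$ with $S_i=r_iS+p_i$, $r_i>0$, $p_i=(x_i,y_i)\in\mathbb{R}^2$, such that distinct squares have disjoint interiors; $A^\circ$ denotes the interior of $A$. Its contact graph is $G=([n],E)$ where $\{i,j\}\in E$ iff $i\ne j$ and $S_i\cap S_j\ne\emptyset$. $E_x$ is the set of pairs $\{i,j\}\in E$ with $r_i+r_j=|x_i-x_j|\ge|y_i-y_j|$, and $E_y$ the set with $r_i+r_j=|y_i-y_j|\ge|x_i-x_j|$. *)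

theory Defs
  imports "HOL-Analysis.Analysis"
begin

definition unit_sq :: "(real \<times> real) set" where
  "unit_sq = {(x, y). -1 \<le> x \<and> x \<le> 1 \<and> -1 \<le> y \<and> y \<le> 1}"

definition hsq :: "real \<Rightarrow> real \<times> real \<Rightarrow> (real \<times> real) set" where
  "hsq r p = (\<lambda>v. r *\<^sub>R v + p) ` unit_sq"

definition homothetic_packing ::
  "nat \<Rightarrow> (nat \<Rightarrow> real) \<Rightarrow> (nat \<Rightarrow> real \<times> real) \<Rightarrow> bool" where
  "homothetic_packing n r p \<longleftrightarrow>
     (\<forall>i\<in>{1..n}. r i > 0) \<and>
     (\<forall>i\<in>{1..n}. \<forall>j\<in>{1..n}. i \<noteq> j \<longrightarrow>
        interior (hsq (r i) (p i)) \<inter> interior (hsq (r j) (p j)) = {})"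

definition contact_edges ::
  "nat \<Rightarrow> (nat \<Rightarrow> real) \<Rightarrow> (nat \<Rightarrow> real \<times> real) \<Rightarrow> nat set set" where
  "contact_edges n r p = {{i, j} | i j. i \<in> {1..n} \<and> j \<in> {1..n} \<and> i \<noteq> j \<and>
       hsq (r i) (p i) \<inter> hsq (r j) (p j) \<noteq> {}}"

definition edges_x ::
  "nat \<Rightarrow> (nat \<Rightarrow> real) \<Rightarrow> (nat \<Rightarrow> real \<times> real) \<Rightarrow> nat set set" where
  "edges_x n r p = {{i, j} | i j. {i, j} \<in> contact_edges n r p \<and>
       r i + r j = \<bar>fst (p i) - fst (p j)\<bar> \<and>
       \<bar>fst (p i) - fst (p j)\<bar> \<ge> \<bar>snd (p i) - snd (p j)\<bar>}"

definition edges_y ::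
  "nat \<Rightarrow> (nat \<Rightarrow> real) \<Rightarrow> (nat \<Rightarrow> real \<times> real) \<Rightarrow> nat set set" where
  "edges_y n r p = {{i, j} | i j. {i, j} \<in> contact_edges n r p \<and>
       r i + r j = \<bar>snd (p i) - snd (p j)\<bar> \<and>
       \<bar>snd (p i) - snd (p j)\<bar> \<ge> \<bar>fst (p i) - fst (p j)\<bar>}"

end

theory Submission imports Defs begin

lemma hsq_eq: assumes "r > 0"
  shows "hsq r p = {fst p - r..fst p + r} \<times> {snd p - r..snd p + r}"
proof
  show "hsq r p \<subseteq> {fst p - r..fst p + r} \<times> {snd p - r..snd p + r}"
  proof
    fix q assume "q \<in> hsq r p"
    then obtain a b where ab: "-1 \<le> a" "a \<le> 1" "-1 \<le> b" "b \<le> 1" "q = r *\<^sub>R (a,b) + p"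
      unfolding hsq_def unit_sq_def by auto
    have "\<bar>r*a\<bar> \<le> r" "\<bar>r*b\<bar> \<le> r" using ab assms by (auto simp: abs_mult intro!: mult_left_le)
    then show "q \<in> {fst p - r..fst p + r} \<times> {snd p - r..snd p + r}" using ab(5)
      by (cases p) auto
  qed
next
  show "{fst p - r..fst p + r} \<times> {snd p - r..snd p + r} \<subseteq> hsq r p"
  proof
    fix q assume q: "q \<in> {fst p - r..fst p + r} \<times> {snd p - r..snd p + r}"
    define v where "v = (1/r) *\<^sub>R (q - p)"
    have "q = r *\<^sub>R v + p" using assms by (simp add: v_def)
    moreover have "v \<in> unit_sq" using q assms
      by (cases p; cases q) (auto simp: v_def unit_sq_def field_simps)
    ultimately show "q \<in> hsq r p" unfolding hsq_def by blast
  qed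
qed

lemma hsq_mem: "r > 0 \<Longrightarrow> q \<in> hsq r p \<longleftrightarrow> \<bar>fst q - fst p\<bar> \<le> r \<and> \<bar>snd q - snd p\<bar> \<le> r"
  by (cases q) (auto simp: hsq_eq abs_le_iff)

lemma hsq_int: "r > 0 \<Longrightarrow> q \<in> interior (hsq r p) \<longleftrightarrow> \<bar>fst q - fst p\<bar> < r \<and> \<bar>snd q - snd p\<bar> < r"
  by (cases q) (auto simp: hsq_eq interior_Times abs_less_iff)

lemma key:
  fixes ri rj cx ex cy ey :: real
  assumes "ri > 0" "rj > 0" "\<bar>cx\<bar> \<le> ri" "\<bar>ex\<bar> \<le> rj" "\<bar>cx + ex\<bar> \<le> ri + rj"
    "cx + ex \<ge> 0 \<Longrightarrow> cx \<ge> 0 \<and> ex \<ge> 0" "cx + ex \<le> 0 \<Longrightarrow> cx \<le> 0 \<and> ex \<le> 0"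
    "\<bar>cy\<bar> < ri" "\<bar>ey\<bar> < rj"
  shows "\<exists>d>0. \<forall>ux uy. \<bar>ux\<bar> < d \<and> \<bar>uy\<bar> < d \<longrightarrow>
     (\<bar>ux - cx\<bar> \<le> ri \<and> \<bar>uy - cy\<bar> \<le> ri) \<or> (\<bar>ux + ex\<bar> \<le> rj \<and> \<bar>uy + ey\<bar> \<le> rj)"
proof (intro exI[of _ "min (ri - \<bar>cy\<bar>) (rj - \<bar>ey\<bar>)"] conjI allI impI)
  show "0 < min (ri - \<bar>cy\<bar>) (rj - \<bar>ey\<bar>)" using assms by auto
  fix ux uy assume u: "\<bar>ux\<bar> < min (ri - \<bar>cy\<bar>) (rj - \<bar>ey\<bar>) \<and> \<bar>uy\<bar> < min (ri - \<bar>cy\<bar>) (rj - \<bar>ey\<bar>)"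
  show "(\<bar>ux - cx\<bar> \<le> ri \<and> \<bar>uy - cy\<bar> \<le> ri) \<or> (\<bar>ux + ex\<bar> \<le> rj \<and> \<bar>uy + ey\<bar> \<le> rj)"
  proof (cases "cx + ex \<ge> 0")
    case True then show ?thesis using assms u by (auto simp: abs_le_iff abs_less_iff min_def split: if_splits)
  next
    case False then show ?thesis using assms u by (auto simp: abs_le_iff abs_less_iff min_def split: if_splits)
  qed
qed

theorem lemma11:
  fixes n :: nat and r :: "nat \<Rightarrow> real" and p :: "nat \<Rightarrow> real \<times> real" and i j :: nat
  assumes "homothetic_packing n r p"
    and "{i, j} \<in> contact_edges n r p"
  defines "pij \<equiv> (fst (p i) - r i * (fst (p i) - fst (p j)) / (r i + r j),
                   snd (p i) - r i * (snd (p i) - snd (p j)) / (r i + r j))"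
  shows "({t *\<^sub>R p i + (1 - t) *\<^sub>R p j | t. t \<in> {0..1}} \<subseteq> hsq (r i) (p i) \<union> hsq (r j) (p j)) \<and>
    ({t *\<^sub>R p i + (1 - t) *\<^sub>R p j | t. t \<in> {0..1}} - {pij}
           \<subseteq> interior (hsq (r i) (p i)) \<union> interior (hsq (r j) (p j))) \<and>
    (pij \<in> interior (hsq (r i) (p i) \<union> hsq (r j) (p j)) \<longleftrightarrow>
           {i, j} \<notin> edges_x n r p \<inter> edges_y n r p)"
proof -
  obtain i' j' where ij': "{i,j} = {i',j'}" "i' \<in> {1..n}" "j' \<in> {1..n}" "i' \<noteq> j'"
    "hsq (r i') (p i') \<inter> hsq (r j') (p j') \<noteq> {}"
    using assms(2) unfolding contact_edges_def by blast
  have ijn: "i \<in> {1..n}" "j \<in> {1..n}" "i \<noteq> j" "hsq (r i) (p i) \<inter> hsq (r j) (p j) \<noteq> {}"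
    using ij' by (auto simp: doubleton_eq_iff)
  have ri: "r i > 0" and rj: "r j > 0" using assms(1) ijn unfolding homothetic_packing_def by auto
  have disj: "interior (hsq (r i) (p i)) \<inter> interior (hsq (r j) (p j)) = {}"
    using assms(1) ijn unfolding homothetic_packing_def by auto
  define R where "R = r i + r j"
  have R: "R > 0" using ri rj by (simp add: R_def)
  define xi where "xi = fst (p i)"
  define yi where "yi = snd (p i)"
  define xj where "xj = fst (p j)"
  define yj where "yj = snd (p j)"
  define dx where "dx = xi - xj"
  define dy where "dy = yi - yj"
  define cx where "cx = r i * dx / R"
  define ex where "ex = r j * dx / R"
  define cy where "cy = r i * dy / R"
  define ey where "ey = r j * dy / R"
  have pij: "pij = (xi - cx, yi - cy)"
    by (simp add: pij_def xi_def yi_def xj_def yj_def dx_def dy_def cx_def cy_def R_def)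
  obtain z where z: "z \<in> hsq (r i) (p i)" "z \<in> hsq (r j) (p j)" using ijn(4) by blast
  have dxR: "\<bar>dx\<bar> \<le> R" and dyR: "\<bar>dy\<bar> \<le> R"
    using z ri rj unfolding hsq_mem[OF ri] hsq_mem[OF rj]
    by (auto simp: dx_def dy_def xi_def xj_def yi_def yj_def R_def abs_le_iff)
  have "cx + ex = R * dx / R" "cy + ey = R * dy / R"
    by (simp_all add: cx_def ex_def cy_def ey_def R_def add_divide_distrib[symmetric] ring_distribs)
  then have sumx: "cx + ex = dx" and sumy: "cy + ey = dy" using R by simp_all
  have acx: "\<bar>cx\<bar> = r i * \<bar>dx\<bar> / R" "\<bar>ex\<bar> = r j * \<bar>dx\<bar> / R"
       "\<bar>cy\<bar> = r i * \<bar>dy\<bar> / R" "\<bar>ey\<bar> = r j * \<bar>dy\<bar> / R"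
    using ri rj R by (simp_all add: cx_def ex_def cy_def ey_def abs_mult)
  have lem1: "r * \<bar>d\<bar> / R \<le> r" "\<bar>d\<bar> < R \<Longrightarrow> r * \<bar>d\<bar> / R < r" "\<bar>d\<bar> = R \<Longrightarrow> r * \<bar>d\<bar> / R = r"
    if "r > 0" "\<bar>d\<bar> \<le> R" for r d :: real
    using that R by (auto simp: field_simps mult_left_mono)
  have bcx: "\<bar>cx\<bar> \<le> r i" "\<bar>ex\<bar> \<le> r j" "\<bar>cy\<bar> \<le> r i" "\<bar>ey\<bar> \<le> r j"
    using acx lem1(1) ri rj dxR dyR by auto
  have sgx: "dx \<ge> 0 \<Longrightarrow> cx \<ge> 0 \<and> ex \<ge> 0" "dx \<le> 0 \<Longrightarrow> cx \<le> 0 \<and> ex \<le> 0"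
    using ri rj R by (auto simp: cx_def ex_def intro!: divide_nonpos_pos mult_nonneg_nonpos)
  have sgy: "dy \<ge> 0 \<Longrightarrow> cy \<ge> 0 \<and> ey \<ge> 0" "dy \<le> 0 \<Longrightarrow> cy \<le> 0 \<and> ey \<le> 0"
    using ri rj R by (auto simp: cy_def ey_def intro!: divide_nonpos_pos mult_nonneg_nonpos)
  have memi: "q \<in> hsq (r i) (p i) \<longleftrightarrow> \<bar>fst q - xi\<bar> \<le> r i \<and> \<bar>snd q - yi\<bar> \<le> r i" for q
    using hsq_mem[OF ri] by (simp add: xi_def yi_def)
  have memj: "q \<in> hsq (r j) (p j) \<longleftrightarrow> \<bar>fst q - xj\<bar> \<le> r j \<and> \<bar>snd q - yj\<bar> \<le> r j" for q
    using hsq_mem[OF rj] by (simp add: xj_def yj_def)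
  have inti: "q \<in> interior (hsq (r i) (p i)) \<longleftrightarrow> \<bar>fst q - xi\<bar> < r i \<and> \<bar>snd q - yi\<bar> < r i" for q
    using hsq_int[OF ri] by (simp add: xi_def yi_def)
  have intj: "q \<in> interior (hsq (r j) (p j)) \<longleftrightarrow> \<bar>fst q - xj\<bar> < r j \<and> \<bar>snd q - yj\<bar> < r j" for q
    using hsq_int[OF rj] by (simp add: xj_def yj_def)
  have maxR: "\<bar>dx\<bar> = R \<or> \<bar>dy\<bar> = R"
  proof (rule ccontr)
    assume "\<not> ?thesis"
    then have "\<bar>dx\<bar> < R" "\<bar>dy\<bar> < R" using dxR dyR by auto
    then have "\<bar>cx\<bar> < r i" "\<bar>ex\<bar> < r j" "\<bar>cy\<bar> < r i" "\<bar>ey\<bar> < r j"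
      using acx lem1(2) ri rj dxR dyR by auto
    then have "pij \<in> interior (hsq (r i) (p i))" "pij \<in> interior (hsq (r j) (p j))"
      unfolding inti intj pij using sumx sumy by (auto simp: dx_def dy_def)
    then show False using disj by blast
  qed
  have seg: "\<bar>fst q - xi\<bar> \<le> (1-t) * R \<and> \<bar>snd q - yi\<bar> \<le> (1-t) * R \<and>
      \<bar>fst q - xj\<bar> \<le> t * R \<and> \<bar>snd q - yj\<bar> \<le> t * R \<and>
      (fst q - xi = - (1-t) * dx) \<and> (snd q - yi = - (1-t) * dy)"
    if "q = t *\<^sub>R p i + (1 - t) *\<^sub>R p j" "t \<in> {0..1}" for q t
  proof -
    have q: "fst q = t * xi + (1-t) * xj" "snd q = t * yi + (1-t) * yj"
      using that(1) by (simp_all add: xi_def yi_def xj_def yj_def)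
    have t: "0 \<le> t" "t \<le> 1" using that(2) by auto
    have e1: "fst q - xi = - (1-t) * dx" "snd q - yi = - (1-t) * dy"
      "fst q - xj = t * dx" "snd q - yj = t * dy"
      using q by (simp_all add: dx_def dy_def algebra_simps)
    show ?thesis unfolding e1 using t dxR dyR
      by (auto simp: abs_mult intro: mult_left_mono)
  qed
  have part1: "{t *\<^sub>R p i + (1 - t) *\<^sub>R p j | t. t \<in> {0..1}} \<subseteq> hsq (r i) (p i) \<union> hsq (r j) (p j)"
  proof
    fix q assume "q \<in> {t *\<^sub>R p i + (1 - t) *\<^sub>R p j | t. t \<in> {0..1}}"
    then obtain t where qt: "q = t *\<^sub>R p i + (1 - t) *\<^sub>R p j" "t \<in> {0..1}" by blast
    note s = seg[OF qt]
    have "(1-t)*R + t*R = r i + r j" by (simp add: R_def algebra_simps)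
    then show "q \<in> hsq (r i) (p i) \<union> hsq (r j) (p j)" unfolding Un_iff memi memj using s by linarith
  qed
  have part2: "{t *\<^sub>R p i + (1 - t) *\<^sub>R p j | t. t \<in> {0..1}} - {pij}
           \<subseteq> interior (hsq (r i) (p i)) \<union> interior (hsq (r j) (p j))"
  proof
    fix q assume "q \<in> {t *\<^sub>R p i + (1 - t) *\<^sub>R p j | t. t \<in> {0..1}} - {pij}"
    then obtain t where qt: "q = t *\<^sub>R p i + (1 - t) *\<^sub>R p j" "t \<in> {0..1}" and qn: "q \<noteq> pij" by blast
    note s = seg[OF qt]
    have sum: "(1-t)*R + t*R = r i + r j" by (simp add: R_def algebra_simps)
    show "q \<in> interior (hsq (r i) (p i)) \<union> interior (hsq (r j) (p j))"
    proof (cases "(1-t)*R < r i \<or> t * R < r j")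
      case True
      then show ?thesis unfolding Un_iff inti intj using s by linarith
    next
      case False
      then have "(1-t)*R = r i" using sum by linarith
      then have "r i / R = 1 - t" using R by (simp add: field_simps)
      then have "cx = (1-t)*dx" "cy = (1-t)*dy" unfolding cx_def cy_def by (metis times_divide_eq_left)+
      then have "q = pij" using s unfolding pij by (cases q) (auto simp: algebra_simps)
      then show ?thesis using qn by blast
    qed
  qed
  have ex_iff: "{i,j} \<in> edges_x n r p \<longleftrightarrow> \<bar>dx\<bar> = R \<and> \<bar>dx\<bar> \<ge> \<bar>dy\<bar>"
  proof
    assume "{i,j} \<in> edges_x n r p"
    then obtain a b where ab: "{i,j} = {a,b}" "r a + r b = \<bar>fst (p a) - fst (p b)\<bar>"
       "\<bar>fst (p a) - fst (p b)\<bar> \<ge> \<bar>snd (p a) - snd (p b)\<bar>"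
      unfolding edges_x_def by blast
    then show "\<bar>dx\<bar> = R \<and> \<bar>dx\<bar> \<ge> \<bar>dy\<bar>"
      by (auto simp: doubleton_eq_iff dx_def dy_def xi_def xj_def yi_def yj_def R_def abs_minus_commute)
  next
    assume "\<bar>dx\<bar> = R \<and> \<bar>dx\<bar> \<ge> \<bar>dy\<bar>"
    then have "r i + r j = \<bar>fst (p i) - fst (p j)\<bar> \<and> \<bar>fst (p i) - fst (p j)\<bar> \<ge> \<bar>snd (p i) - snd (p j)\<bar>"
      by (simp add: dx_def dy_def xi_def xj_def yi_def yj_def R_def)
    then show "{i,j} \<in> edges_x n r p" using assms(2) unfolding edges_x_def by blast
  qed
  have ey_iff: "{i,j} \<in> edges_y n r p \<longleftrightarrow> \<bar>dy\<bar> = R \<and> \<bar>dy\<bar> \<ge> \<bar>dx\<bar>"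
  proof
    assume "{i,j} \<in> edges_y n r p"
    then obtain a b where ab: "{i,j} = {a,b}" "r a + r b = \<bar>snd (p a) - snd (p b)\<bar>"
       "\<bar>snd (p a) - snd (p b)\<bar> \<ge> \<bar>fst (p a) - fst (p b)\<bar>"
      unfolding edges_y_def by blast
    then show "\<bar>dy\<bar> = R \<and> \<bar>dy\<bar> \<ge> \<bar>dx\<bar>"
      by (auto simp: doubleton_eq_iff dx_def dy_def xi_def xj_def yi_def yj_def R_def abs_minus_commute)
  next
    assume "\<bar>dy\<bar> = R \<and> \<bar>dy\<bar> \<ge> \<bar>dx\<bar>"
    then have "r i + r j = \<bar>snd (p i) - snd (p j)\<bar> \<and> \<bar>snd (p i) - snd (p j)\<bar> \<ge> \<bar>fst (p i) - fst (p j)\<bar>"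
      by (simp add: dx_def dy_def xi_def xj_def yi_def yj_def R_def)
    then show "{i,j} \<in> edges_y n r p" using assms(2) unfolding edges_y_def by blast
  qed
  have corner: "{i,j} \<in> edges_x n r p \<inter> edges_y n r p \<longleftrightarrow> \<bar>dx\<bar> = R \<and> \<bar>dy\<bar> = R"
    using ex_iff ey_iff by auto
  have geo: "fst q - xi = (fst q - fst pij) - cx" "snd q - yi = (snd q - snd pij) - cy"
    "fst q - xj = (fst q - fst pij) + ex" "snd q - yj = (snd q - snd pij) + ey" for q
    using sumx sumy unfolding pij by (simp_all add: dx_def dy_def algebra_simps)
  have part3: "pij \<in> interior (hsq (r i) (p i) \<union> hsq (r j) (p j)) \<longleftrightarrow> \<not> (\<bar>dx\<bar> = R \<and> \<bar>dy\<bar> = R)"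
  proof
    assume "pij \<in> interior (hsq (r i) (p i) \<union> hsq (r j) (p j))"
    then obtain e where e: "e > 0" "ball pij e \<subseteq> hsq (r i) (p i) \<union> hsq (r j) (p j)"
      unfolding mem_interior by blast
    show "\<not> (\<bar>dx\<bar> = R \<and> \<bar>dy\<bar> = R)"
    proof
      assume c: "\<bar>dx\<bar> = R \<and> \<bar>dy\<bar> = R"
      obtain sx where sx: "sx = 1 \<or> sx = -1" "dx = sx * R"
      proof (cases "dx \<ge> 0")
        case True then show ?thesis using c by (intro that[of 1]) auto
      next
        case False then show ?thesis using c by (intro that[of "-1"]) auto
      qed
      obtain sy where sy: "sy = 1 \<or> sy = -1" "dy = sy * R"
      proof (cases "dy \<ge> 0")
        case True then show ?thesis using c by (intro that[of 1]) auto
      next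
        case False then show ?thesis using c by (intro that[of "-1"]) auto
      qed
      have cxs: "cx = r i * sx" "ex = r j * sx" "cy = r i * sy" "ey = r j * sy"
        using R sx sy by (auto simp: cx_def ex_def cy_def ey_def)
      define q where "q = (xi - cx - (e/2) * sx, yi - cy + (e/2) * sy)"
      have "dist pij q = sqrt ((e/2)^2 + (e/2)^2)"
        using sx sy unfolding pij q_def dist_Pair_Pair by (auto simp: dist_real_def abs_of_pos[OF e(1)])
      also have "\<dots> < e" using e by (intro real_less_lsqrt) (auto simp: power2_eq_square)
      finally have "q \<in> ball pij e" by simp
      then have "q \<in> hsq (r i) (p i) \<union> hsq (r j) (p j)" using e by blast
      moreover have n1: "\<not> \<bar>fst q - xi\<bar> \<le> r i" using sx e ri unfolding q_def cxs by auto
      moreover have n2: "\<not> \<bar>snd q - yj\<bar> \<le> r j" using sy e rj sumy unfolding q_def cxs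
        by (auto simp: dy_def algebra_simps)
      have "q \<notin> hsq (r i) (p i)" using n1 unfolding memi by (rule contrapos_nn) (rule conjunct1)
      moreover have "q \<notin> hsq (r j) (p j)" using n2 unfolding memj by (rule contrapos_nn) (rule conjunct2)
      ultimately show False by blast
    qed
  next
    assume nc: "\<not> (\<bar>dx\<bar> = R \<and> \<bar>dy\<bar> = R)"
    have "\<exists>d>0. \<forall>q. \<bar>fst q - fst pij\<bar> < d \<and> \<bar>snd q - snd pij\<bar> < d \<longrightarrow>
          q \<in> hsq (r i) (p i) \<union> hsq (r j) (p j)"
    proof (cases "\<bar>dy\<bar> = R")
      case False
      then have "\<bar>dy\<bar> < R" using dyR by auto
      then have "\<bar>cy\<bar> < r i" "\<bar>ey\<bar> < r j" using acx lem1(2) ri rj dyR by auto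
      then obtain d where d: "d > 0" "\<And>ux uy. \<bar>ux\<bar> < d \<and> \<bar>uy\<bar> < d \<Longrightarrow>
          (\<bar>ux - cx\<bar> \<le> r i \<and> \<bar>uy - cy\<bar> \<le> r i) \<or> (\<bar>ux + ex\<bar> \<le> r j \<and> \<bar>uy + ey\<bar> \<le> r j)"
      proof -
        have k1: "\<bar>cx + ex\<bar> \<le> r i + r j" using sumx dxR by (simp add: R_def)
        have k2: "cx + ex \<ge> 0 \<Longrightarrow> cx \<ge> 0 \<and> ex \<ge> 0" "cx + ex \<le> 0 \<Longrightarrow> cx \<le> 0 \<and> ex \<le> 0"
          using sgx sumx by simp_all
        from key[OF ri rj bcx(1,2) k1 k2 \<open>\<bar>cy\<bar> < r i\<close> \<open>\<bar>ey\<bar> < r j\<close>] that show thesis by blast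
      qed
      show ?thesis
      proof (intro exI[of _ d] conjI allI impI)
        fix q assume "\<bar>fst q - fst pij\<bar> < d \<and> \<bar>snd q - snd pij\<bar> < d"
        from d(2)[OF this] show "q \<in> hsq (r i) (p i) \<union> hsq (r j) (p j)"
          unfolding Un_iff memi memj using geo by (simp only:)
      qed (use d in auto)
    next
      case True
      then have "\<bar>dx\<bar> < R" using dxR nc by auto
      then have "\<bar>cx\<bar> < r i" "\<bar>ex\<bar> < r j" using acx lem1(2) ri rj dxR by auto
      then obtain d where d: "d > 0" "\<And>ux uy. \<bar>ux\<bar> < d \<and> \<bar>uy\<bar> < d \<Longrightarrow>
          (\<bar>ux - cy\<bar> \<le> r i \<and> \<bar>uy - cx\<bar> \<le> r i) \<or> (\<bar>ux + ey\<bar> \<le> r j \<and> \<bar>uy + ex\<bar> \<le> r j)"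
      proof -
        have k1: "\<bar>cy + ey\<bar> \<le> r i + r j" using sumy dyR by (simp add: R_def)
        have k2: "cy + ey \<ge> 0 \<Longrightarrow> cy \<ge> 0 \<and> ey \<ge> 0" "cy + ey \<le> 0 \<Longrightarrow> cy \<le> 0 \<and> ey \<le> 0"
          using sgy sumy by simp_all
        from key[OF ri rj bcx(3,4) k1 k2 \<open>\<bar>cx\<bar> < r i\<close> \<open>\<bar>ex\<bar> < r j\<close>] that show thesis by blast
      qed
      show ?thesis
      proof (intro exI[of _ d] conjI allI impI)
        fix q assume "\<bar>fst q - fst pij\<bar> < d \<and> \<bar>snd q - snd pij\<bar> < d"
        then have "\<bar>snd q - snd pij\<bar> < d \<and> \<bar>fst q - fst pij\<bar> < d" by auto
        from d(2)[OF this] show "q \<in> hsq (r i) (p i) \<union> hsq (r j) (p j)"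
          unfolding Un_iff memi memj using geo by (simp only:) blast
      qed (use d in auto)
    qed
    then obtain d where d: "d > 0" "\<And>q. \<bar>fst q - fst pij\<bar> < d \<and> \<bar>snd q - snd pij\<bar> < d \<Longrightarrow>
          q \<in> hsq (r i) (p i) \<union> hsq (r j) (p j)" by blast
    define U where "U = {fst pij - d<..<fst pij + d} \<times> {snd pij - d<..<snd pij + d}"
    have "open U" unfolding U_def by (intro open_Times) auto
    moreover have "pij \<in> U" using d(1) unfolding U_def by (cases pij) auto
    moreover have "U \<subseteq> hsq (r i) (p i) \<union> hsq (r j) (p j)"
    proof
      fix q assume "q \<in> U"
      then have "\<bar>fst q - fst pij\<bar> < d \<and> \<bar>snd q - snd pij\<bar> < d"
        unfolding U_def by (cases q) (auto simp: abs_less_iff)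
      then show "q \<in> hsq (r i) (p i) \<union> hsq (r j) (p j)" by (rule d(2))
    qed
    ultimately show "pij \<in> interior (hsq (r i) (p i) \<union> hsq (r j) (p j))"
      using interior_maximal by blast
  qed
  show ?thesis using part1 part2 part3 corner by blast
qed

end
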